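(* Let $(G,\oplus)$ be a gyrogroup and let $S\subseteq G\setminus\{e\}$ be symmetric. (1) If $\mathrm{gyr}[g,s](S)=S$ for all $s\in S$ and $g\in G$, then the R-Cayley graph $\mathrm{RCay}(G,S)$ is undirected. (2) Conversely, if $\mathrm{RCay}(G,S)$ is undirected, then $\mathrm{gyr}[g,s](s)\in S$ for all $g\in G$ and $s\in S$.
   Context: A gyrogroup is a nonempty set $G$ with a binary operation $\oplus$ such that: (i) there is a unique $e\in G$ with $e\oplus x=x=x\oplus e$ for all $x$; (ii) each $x\in G$ has a unique inverse $\ominus x$ with $\ominus x\oplus x=e=x\oplus(\ominus x)$; (iii) for all $x,y\in G$ there is an automorphism $\mathrm{gyr}[x,y]$ of $(G,\oplus)$ with $x\oplus(y\oplus z)=(x\oplus y)\oplus \mathrm{gyr}[x,y](z)$ for all $z\in G$; (iv) $\mathrm{gyr}[x\oplus y,y]=\mathrm{gyr}[x,y]$ for all $x,y$. A subset $S\subseteq G$ is symmetric if $\ominus s\in S$ for every $s\in S$. For $S\subseteq G$ with $e\notin S$, the R-Cayley graph $\mathrm{RCay}(G,S)$ is the directed graph with vertex set $G$ and a directed edge $u\to v$ iff $v=u\oplus s$ for some $s\in S$. The graph is undirected if whenever $u\to v$ is an edge, $v\to u$ is also an edge. *)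

theory Defs
  imports Main
begin

text \<open>Since gyr[x,y](z) is uniquely
  determined by the left loop property (left cancellation holds in gyrogroups),
  carrying gyr as data is equivalent to postulating its existence.\<close>

definition is_gyro_identity :: "'a set \<Rightarrow> ('a \<Rightarrow> 'a \<Rightarrow> 'a) \<Rightarrow> 'a \<Rightarrow> bool" where
  "is_gyro_identity G op e \<longleftrightarrow> e \<in> G \<and> (\<forall>x\<in>G. op e x = x \<and> op x e = x)"

definition gyro_id :: "'a set \<Rightarrow> ('a \<Rightarrow> 'a \<Rightarrow> 'a) \<Rightarrow> 'a" where
  "gyro_id G op = (THE e. is_gyro_identity G op e)"

definition gyro_inv :: "'a set \<Rightarrow> ('a \<Rightarrow> 'a \<Rightarrow> 'a) \<Rightarrow> 'a \<Rightarrow> 'a" where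
  "gyro_inv G op x = (THE y. y \<in> G \<and> op y x = gyro_id G op \<and> op x y = gyro_id G op)"

definition gyro_aut :: "'a set \<Rightarrow> ('a \<Rightarrow> 'a \<Rightarrow> 'a) \<Rightarrow> ('a \<Rightarrow> 'a) \<Rightarrow> bool" where
  "gyro_aut G op f \<longleftrightarrow> bij_betw f G G \<and> (\<forall>a\<in>G. \<forall>b\<in>G. f (op a b) = op (f a) (f b))"

definition gyrogroup :: "'a set \<Rightarrow> ('a \<Rightarrow> 'a \<Rightarrow> 'a) \<Rightarrow> ('a \<Rightarrow> 'a \<Rightarrow> 'a \<Rightarrow> 'a) \<Rightarrow> bool" where
  "gyrogroup G op gyr \<longleftrightarrow>
     G \<noteq> {} \<and>
     (\<forall>x\<in>G. \<forall>y\<in>G. op x y \<in> G) \<and>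
     (\<exists>!e. is_gyro_identity G op e) \<and>
     (\<forall>x\<in>G. \<exists>!y. y \<in> G \<and> op y x = gyro_id G op \<and> op x y = gyro_id G op) \<and>
     (\<forall>x\<in>G. \<forall>y\<in>G. gyro_aut G op (gyr x y)) \<and>
     (\<forall>x\<in>G. \<forall>y\<in>G. \<forall>z\<in>G. op x (op y z) = op (op x y) (gyr x y z)) \<and>
     (\<forall>x\<in>G. \<forall>y\<in>G. gyr (op x y) y = gyr x y)"

definition symmetric_subset :: "'a set \<Rightarrow> ('a \<Rightarrow> 'a \<Rightarrow> 'a) \<Rightarrow> 'a set \<Rightarrow> bool" where
  "symmetric_subset G op S \<longleftrightarrow> (\<forall>s\<in>S. gyro_inv G op s \<in> S)"

definition rcay_edge :: "'a set \<Rightarrow> ('a \<Rightarrow> 'a \<Rightarrow> 'a) \<Rightarrow> 'a set \<Rightarrow> 'a \<Rightarrow> 'a \<Rightarrow> bool" where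
  "rcay_edge G op S u v \<longleftrightarrow> u \<in> G \<and> v \<in> G \<and> (\<exists>s\<in>S. v = op u s)"

definition rcay_undirected :: "'a set \<Rightarrow> ('a \<Rightarrow> 'a \<Rightarrow> 'a) \<Rightarrow> 'a set \<Rightarrow> bool" where
  "rcay_undirected G op S \<longleftrightarrow> (\<forall>u v. rcay_edge G op S u v \<longrightarrow> rcay_edge G op S v u)"

end

theory Submission
  imports Defs
begin

theorem mainTheorem3:
  fixes G :: "'a set" and op :: "'a \<Rightarrow> 'a \<Rightarrow> 'a" and gyr :: "'a \<Rightarrow> 'a \<Rightarrow> 'a \<Rightarrow> 'a"
    and S :: "'a set"
  assumes "gyrogroup G op gyr"
    and "S \<subseteq> G - {gyro_id G op}"
    and "symmetric_subset G op S"
  shows "((\<forall>g\<in>G. \<forall>s\<in>S. gyr g s ` S = S) \<longrightarrow> rcay_undirected G op S)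
       \<and> (rcay_undirected G op S \<longrightarrow> (\<forall>g\<in>G. \<forall>s\<in>S. gyr g s s \<in> S))"
proof -
  define e where "e = gyro_id G op"
  define inv where "inv = gyro_inv G op"
  have gg: "G \<noteq> {}" "\<And>x y. x\<in>G \<Longrightarrow> y\<in>G \<Longrightarrow> op x y \<in> G"
    "\<exists>!e. is_gyro_identity G op e"
    "\<And>x. x\<in>G \<Longrightarrow> \<exists>!y. y \<in> G \<and> op y x = e \<and> op x y = e"
    "\<And>x y. x\<in>G \<Longrightarrow> y\<in>G \<Longrightarrow> gyro_aut G op (gyr x y)"
    "\<And>x y z. x\<in>G \<Longrightarrow> y\<in>G \<Longrightarrow> z\<in>G \<Longrightarrow> op x (op y z) = op (op x y) (gyr x y z)"
    using assms(1) unfolding gyrogroup_def e_def by auto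
  have eid: "is_gyro_identity G op e" unfolding e_def gyro_id_def using gg(3) by (rule theI')
  hence eG: "e \<in> G" and el: "\<And>x. x\<in>G \<Longrightarrow> op e x = x" and er: "\<And>x. x\<in>G \<Longrightarrow> op x e = x"
    unfolding is_gyro_identity_def by auto
  have invp: "inv x \<in> G \<and> op (inv x) x = e \<and> op x (inv x) = e" if "x \<in> G" for x
    unfolding inv_def gyro_inv_def e_def[symmetric] using gg(4)[OF that] by (rule theI')
  have aut: "bij_betw (gyr x y) G G" "\<And>a b. a\<in>G \<Longrightarrow> b\<in>G \<Longrightarrow> gyr x y (op a b) = op (gyr x y a) (gyr x y b)"
    if "x\<in>G" "y\<in>G" for x y using gg(5)[OF that] unfolding gyro_aut_def by auto
  have gyrG: "gyr x y z \<in> G" if "x\<in>G" "y\<in>G" "z\<in>G" for x y z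
    using aut(1)[OF that(1,2)] that(3) by (auto simp: bij_betw_def)
  have cancel: "b = c" if "a\<in>G" "b\<in>G" "c\<in>G" "op a b = op a c" for a b c
  proof -
    have ia: "inv a \<in> G" "op (inv a) a = e" using invp[OF that(1)] by auto
    have "op (inv a) (op a b) = gyr (inv a) a b" using gg(6)[OF ia(1) that(1) that(2)] ia el[OF gyrG[OF ia(1) that(1) that(2)]]
      by simp
    moreover have "op (inv a) (op a c) = gyr (inv a) a c" using gg(6)[OF ia(1) that(1) that(3)] ia el[OF gyrG[OF ia(1) that(1) that(3)]]
      by simp
    ultimately have "gyr (inv a) a b = gyr (inv a) a c" using that(4) by simp
    thus ?thesis using aut(1)[OF ia(1) that(1)] that(2,3) by (simp add: bij_betw_def inj_on_def)
  qed
  have SG: "S \<subseteq> G" using assms(2) by auto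
  have Sinv: "inv s \<in> S" if "s \<in> S" for s using assms(3) that unfolding symmetric_subset_def inv_def by auto
  have key: "op (op u s) (gyr u s (inv s)) = u" if "u\<in>G" "s\<in>G" for u s
    using gg(6)[OF that invp[OF that(2), THEN conjunct1]] invp[OF that(2)] er[OF that(1)] by simp
  show ?thesis
  proof (intro conjI impI ballI)
    assume H: "\<forall>g\<in>G. \<forall>s\<in>S. gyr g s ` S = S"
    show "rcay_undirected G op S" unfolding rcay_undirected_def
    proof (intro allI impI)
      fix u v assume "rcay_edge G op S u v"
      then obtain s where s: "u\<in>G" "v\<in>G" "s\<in>S" "v = op u s" unfolding rcay_edge_def by auto
      have "gyr u s (inv s) \<in> S" using H s(1,3) Sinv[OF s(3)] by blast
      moreover have "op v (gyr u s (inv s)) = u" using s key[OF s(1)] SG by auto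
      ultimately show "rcay_edge G op S v u" unfolding rcay_edge_def using s by metis
    qed
  next
    fix g s assume U: "rcay_undirected G op S" and g: "g\<in>G" and s: "s\<in>S"
    have sG: "s\<in>G" using s SG by auto
    have "rcay_edge G op S g (op g s)" unfolding rcay_edge_def using g s gg(2) sG by auto
    then obtain t where t: "t\<in>S" "g = op (op g s) t" using U unfolding rcay_undirected_def rcay_edge_def by blast
    have tG: "t\<in>G" using t SG by auto
    have gsG: "op g s \<in> G" using gg(2) g sG by auto
    have tt: "t = gyr g s (inv s)"
      using cancel[OF gsG tG gyrG[OF g sG invp[OF sG, THEN conjunct1]]] t(2) key[OF g sG] by simp
    have ge: "gyr g s e = e"
    proof -
      have "op (gyr g s e) (gyr g s e) = gyr g s e" using aut(2)[OF g sG eG eG] er[OF eG] by simp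
      also have "\<dots> = op (gyr g s e) e" using er gyrG[OF g sG eG] by simp
      finally show ?thesis using cancel gyrG[OF g sG eG] eG by blast
    qed
    define x where "x = gyr g s s"
    have xG: "x \<in> G" unfolding x_def using gyrG g sG by auto
    have "op x t = e" unfolding x_def tt using aut(2)[OF g sG sG invp[OF sG, THEN conjunct1]] invp[OF sG] ge by simp
    hence "t = inv x" using cancel[OF xG tG] invp[OF xG] by auto
    moreover have "x = inv (inv x)" using cancel[of "inv x" x "inv (inv x)"] invp[OF xG] invp[of "inv x"] xG by auto
    ultimately have "x = inv t" by simp
    thus "gyr g s s \<in> S" using Sinv[OF t(1)] x_def by simp
  qed
qed

end
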